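(* Consider the linear regression model $y_i=x_i^t\beta+\sigma\varepsilon_i$, $i=1,\dots,n$, with fixed covariates $x_i\in\mathbb{R}^p$, $\varepsilon_i$ i.i.d. with density $$f_{\rm EH}(\varepsilon)=(1-s)\,\phi(\varepsilon;0,1)+s\int_0^\infty \phi(\varepsilon;0,u)\,H(u;\gamma)\,du,\qquad H(u;\gamma)=\frac{\gamma}{1+u}\{1+\log(1+u)\}^{-1-\gamma},$$ $s\in(0,1)$, $\gamma>0$ fixed. Let $\sigma^2$ have an inverse-gamma prior and, conditionally on $\sigma$, let $\beta_1,\dots,\beta_p$ be independent with $\beta_k\mid\sigma\sim\frac1\sigma\pi_\beta(\beta_k/\sigma)$, where $\pi_\beta$ is a horseshoe density $\pi_\beta(t)=\int_0^\infty\phi(t;0,\tau^2\lambda^2)\frac{2}{\pi(1+\lambda^2)}\,d\lambda$ for a fixed $\tau>0$. If $n\ge 2$, then $E[|\beta_k|^2\mid y]<\infty$ for each $k=1,\dots,p$.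
   Context: $\phi(\cdot;0,v)$ is the $N(0,v)$ density; $y=(y_1,\dots,y_n)$ is the observed data and $E[\cdot\mid y]$ the posterior expectation. *)

theory Defs
  imports "HOL-Analysis.Analysis"
begin

definition phi :: "real \<Rightarrow> real \<Rightarrow> real" where
  "phi v x = exp (- (x ^ 2) / (2 * v)) / sqrt (2 * pi * v)"

definition H_EH :: "real \<Rightarrow> real \<Rightarrow> real" where
  "H_EH \<gamma> u = \<gamma> / (1 + u) * (1 + ln (1 + u)) powr (- 1 - \<gamma>)"

definition f_EH :: "real \<Rightarrow> real \<Rightarrow> real \<Rightarrow> ennreal" where
  "f_EH s \<gamma> e = ennreal ((1 - s) * phi 1 e)
      + ennreal s * (\<integral>\<^sup>+ u \<in> {0<..}. ennreal (phi u e * H_EH \<gamma> u) \<partial>lborel)"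

definition horseshoe :: "real \<Rightarrow> real \<Rightarrow> ennreal" where
  "horseshoe \<tau> t = (\<integral>\<^sup>+ l \<in> {0<..}. ennreal (phi (\<tau>\<^sup>2 * l\<^sup>2) t * (2 / (pi * (1 + l\<^sup>2)))) \<partial>lborel)"

definition invgamma_density :: "real \<Rightarrow> real \<Rightarrow> real \<Rightarrow> real" where
  "invgamma_density a b v = b powr a / Gamma a * v powr (- a - 1) * exp (- b / v)"

text \<open>Joint density of (beta, sigma^2, y): prior times likelihood, v = sigma^2 > 0.\<close>
definition joint_density ::
  "real \<Rightarrow> real \<Rightarrow> real \<Rightarrow> real \<Rightarrow> real \<Rightarrow> ('n::finite \<Rightarrow> real^'p::finite) \<Rightarrow> real^'n
     \<Rightarrow> real^'p \<Rightarrow> real \<Rightarrow> ennreal" where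
  "joint_density s \<gamma> \<tau> a b x y \<beta> v =
     ennreal (invgamma_density a b v)
     * (\<Prod>j\<in>UNIV. ennreal (1 / sqrt v) * horseshoe \<tau> (\<beta> $ j / sqrt v))
     * (\<Prod>i\<in>UNIV. ennreal (1 / sqrt v) * f_EH s \<gamma> ((y $ i - x i \<bullet> \<beta>) / sqrt v))"

text \<open>Posterior expectation E[g(beta, sigma^2) | y] for nonnegative g.\<close>
definition posterior_expectation ::
  "real \<Rightarrow> real \<Rightarrow> real \<Rightarrow> real \<Rightarrow> real \<Rightarrow> ('n::finite \<Rightarrow> real^'p::finite) \<Rightarrow> real^'n
     \<Rightarrow> (real^'p \<Rightarrow> real \<Rightarrow> real) \<Rightarrow> ennreal" where
  "posterior_expectation s \<gamma> \<tau> a b x y g =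
     (\<integral>\<^sup>+ v \<in> {0<..}. (\<integral>\<^sup>+ \<beta>. ennreal (g \<beta> v) * joint_density s \<gamma> \<tau> a b x y \<beta> v \<partial>lborel) \<partial>lborel)
     / (\<integral>\<^sup>+ v \<in> {0<..}. (\<integral>\<^sup>+ \<beta>. joint_density s \<gamma> \<tau> a b x y \<beta> v \<partial>lborel) \<partial>lborel)"

end

theory Submission
  imports Defs "HOL-Probability.Distributions" "HOL-Real_Asymp.Real_Asymp"
begin



lemma phi_meas[measurable (raw)]: assumes [measurable]: "f \<in> borel_measurable M" "g \<in> borel_measurable M" shows "(\<lambda>x. phi (f x) (g x)) \<in> borel_measurable M"
  unfolding phi_def by measurable

lemma H_meas[measurable (raw)]: assumes [measurable]: "f \<in> borel_measurable M" shows "(\<lambda>x. H_EH g (f x)) \<in> borel_measurable M"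
  unfolding H_EH_def by measurable

lemma hs_meas[measurable]: "horseshoe t \<in> borel_measurable borel"
  unfolding horseshoe_def by measurable

lemma fEH_meas[measurable]: "f_EH s g \<in> borel_measurable borel"
  unfolding f_EH_def by measurable

lemma phi_normal: "0 < w \<Longrightarrow> phi w x = normal_density 0 (sqrt w) x"
  unfolding phi_def normal_density_def by (simp add: field_simps)

lemma phi_nonneg: "0 \<le> w \<Longrightarrow> 0 \<le> phi w x"
  unfolding phi_def by simp

lemma int_phi: "0 < w \<Longrightarrow> (\<integral>\<^sup>+ x. ennreal (phi w x) \<partial>lborel) = 1"
  by (simp add: phi_normal nn_integral_eq_integral)





lemma nn_FTC_Ioi:
  fixes f F :: "real \<Rightarrow> real" and c A B :: real
  assumes D: "\<And>x. c < x \<Longrightarrow> DERIV F x :> f x" and C: "\<And>x. c < x \<Longrightarrow> isCont f x"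
    and P: "\<And>x. c < x \<Longrightarrow> 0 \<le> f x"
    and LA: "(F \<longlongrightarrow> A) (at_right c)" and LB: "(F \<longlongrightarrow> B) at_top"
  shows "(\<integral>\<^sup>+x\<in>{c<..}. ennreal (f x) \<partial>lborel) = ennreal (B - A)"
proof -
  have e: "einterval (ereal c) \<infinity> = {c<..}" by (auto simp: einterval_def)
  have r: "set_integrable lborel (einterval (ereal c) \<infinity>) f \<and> (LBINT x=ereal c..\<infinity>. f x) = B - A"
    apply (intro conjI interval_integral_FTC_nonneg[where F=F])
    using D C P LA LB by (auto simp: ereal_tendsto_simps)
  have i: "integrable lborel (\<lambda>x. indicator {c<..} x * f x)"
    using r e by (simp add: set_integrable_def)
  have v: "(\<integral>x. indicator {c<..} x * f x \<partial>lborel) = B - A"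
    using r e by (simp add: interval_lebesgue_integral_def set_lebesgue_integral_def)
  have "(\<integral>\<^sup>+x\<in>{c<..}. ennreal (f x) \<partial>lborel) = (\<integral>\<^sup>+x. ennreal (indicator {c<..} x * f x) \<partial>lborel)"
    by (intro nn_integral_cong) (auto simp: indicator_def)
  also have "\<dots> = ennreal (B - A)"
    using i v P by (subst nn_integral_eq_integral) (auto simp: indicator_def)
  finally show ?thesis .
qed




lemma Phi_nth: "(\<Sum>b\<in>Basis. f b *\<^sub>R b :: real^'p::finite) $ j = f (axis j 1)"
proof -
  have "(\<Sum>b\<in>Basis. f b *\<^sub>R b :: real^'p) $ j = (\<Sum>b\<in>Basis. f b * (b \<bullet> axis j 1))"
    by (simp add: cart_eq_inner_axis[of _ j] inner_sum_left)
  also have "\<dots> = (\<Sum>b\<in>Basis. if b = axis j 1 then f b else 0)"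
    by (intro sum.cong) (auto simp: inner_Basis)
  also have "\<dots> = f (axis j 1)" by (simp add: sum.delta')
  finally show ?thesis .
qed

lemma Phi_inner: "w \<bullet> (\<Sum>b\<in>Basis. f b *\<^sub>R b :: 'a::euclidean_space) = (\<Sum>b\<in>Basis. f b * (w \<bullet> b))"
  by (simp add: inner_sum_right)

lemma vec_meas_test: "(\<lambda>\<beta>::real^'p::finite. \<beta> $ j) \<in> borel_measurable borel"
  by measurable

lemma Phi_meas: "(\<lambda>f. \<Sum>b\<in>Basis. f b *\<^sub>R b :: 'a::euclidean_space) \<in> measurable (\<Pi>\<^sub>M b\<in>Basis. lborel) borel"
  by measurable




lemma affine_int:
  fixes q :: "real \<Rightarrow> ennreal" and c T :: real
  assumes [measurable]: "q \<in> borel_measurable borel" and c: "c \<noteq> 0"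
  shows "(\<integral>\<^sup>+y. q (T + c * y) \<partial>lborel) = ennreal (1/\<bar>c\<bar>) * (\<integral>\<^sup>+t. q t \<partial>lborel)"
proof -
  have "(\<integral>\<^sup>+t. q t \<partial>lborel) = ennreal \<bar>c\<bar> * (\<integral>\<^sup>+y. q (T + c * y) \<partial>lborel)"
    using nn_integral_real_affine[of q c T] c by simp
  then have "ennreal (1/\<bar>c\<bar>) * (\<integral>\<^sup>+t. q t \<partial>lborel) = (ennreal (1/\<bar>c\<bar>) * ennreal \<bar>c\<bar>) * (\<integral>\<^sup>+y. q (T + c * y) \<partial>lborel)"
    by (simp add: mult.assoc)
  also have "ennreal (1/\<bar>c\<bar>) * ennreal \<bar>c\<bar> = 1"
    using c by (simp add: ennreal_mult''[symmetric])
  finally show ?thesis by simp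
qed

lemma Basis_vec_range: "(Basis :: (real^'p::finite) set) = range (\<lambda>i. axis i 1)"
  by (auto simp: Basis_vec_def)

lemma key:
  fixes w :: "real^'p::finite" and k :: 'p and q g :: "real \<Rightarrow> ennreal" and y0 :: real
  assumes [measurable]: "q \<in> borel_measurable borel" "g \<in> borel_measurable borel" and wk: "w $ k \<noteq> 0"
  shows "(\<integral>\<^sup>+\<beta>. q (y0 - w \<bullet> \<beta>) * (\<Prod>j\<in>UNIV-{k}. g (\<beta> $ j)) \<partial>lborel)
     = ennreal (1/\<bar>w$k\<bar>) * (\<integral>\<^sup>+t. q t \<partial>lborel) * (\<integral>\<^sup>+t. g t \<partial>lborel) ^ (CARD('p) - 1)"
proof -
  define G where "G \<beta> = q (y0 - w \<bullet> \<beta>) * (\<Prod>j\<in>UNIV-{k}. g (\<beta> $ j))" for \<beta> :: "real^'p"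
  have Gm[measurable]: "G \<in> borel_measurable borel" unfolding G_def by measurable
  interpret P: product_sigma_finite "\<lambda>_::real^'p. lborel::real measure" by standard
  define bk where "bk = (axis k 1 :: real^'p)"
  have bkB: "bk \<in> Basis" by (simp add: bk_def)
  have B: "insert bk (Basis - {bk}) = Basis" using bkB by auto
  have lb: "(lborel::(real^'p) measure) = distr (\<Pi>\<^sub>M b\<in>Basis. lborel) borel (\<lambda>f. \<Sum>b\<in>Basis. f b *\<^sub>R b)"
    by (rule lborel_eq)
  have "(\<integral>\<^sup>+\<beta>. G \<beta> \<partial>lborel) = (\<integral>\<^sup>+f. G (\<Sum>b\<in>Basis. f b *\<^sub>R b) \<partial>(\<Pi>\<^sub>M b\<in>Basis. lborel))"
    unfolding lb by (simp add: nn_integral_distr Phi_meas)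
  also have "\<dots> = (\<integral>\<^sup>+f. (\<integral>\<^sup>+y. G (\<Sum>b\<in>Basis. (f(bk:=y)) b *\<^sub>R b) \<partial>lborel) \<partial>(\<Pi>\<^sub>M b\<in>Basis-{bk}. lborel))"
    using P.product_nn_integral_insert[of "Basis - {bk}" bk "\<lambda>f. G (\<Sum>b\<in>Basis. f b *\<^sub>R b)"]
    unfolding B by (simp add: Phi_meas)
  also have "\<dots> = (\<integral>\<^sup>+f. ennreal (1/\<bar>w$k\<bar>) * (\<integral>\<^sup>+t. q t \<partial>lborel) * (\<Prod>b\<in>Basis-{bk}. g (f b)) \<partial>(\<Pi>\<^sub>M b\<in>Basis-{bk}. lborel))"
  proof (intro nn_integral_cong)
    fix f :: "real^'p \<Rightarrow> real"
    define T where "T = y0 - (\<Sum>b\<in>Basis-{bk}. f b * (w \<bullet> b))"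
    have wb: "w \<bullet> bk = w $ k" by (simp add: bk_def cart_eq_inner_axis)
    have inn: "w \<bullet> (\<Sum>b\<in>Basis. (f(bk:=y)) b *\<^sub>R b) = y * (w $ k) + (\<Sum>b\<in>Basis-{bk}. f b * (w \<bullet> b))" for y
    proof -
      have "w \<bullet> (\<Sum>b\<in>Basis. (f(bk:=y)) b *\<^sub>R b) = (\<Sum>b\<in>Basis. (f(bk:=y)) b * (w \<bullet> b))"
        by (rule Phi_inner)
      also have "\<dots> = (f(bk:=y)) bk * (w \<bullet> bk) + (\<Sum>b\<in>Basis-{bk}. (f(bk:=y)) b * (w \<bullet> b))"
        using bkB by (simp add: sum.remove)
      also have "(\<Sum>b\<in>Basis-{bk}. (f(bk:=y)) b * (w \<bullet> b)) = (\<Sum>b\<in>Basis-{bk}. f b * (w \<bullet> b))"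
        by (intro sum.cong) auto
      finally show ?thesis using wb by simp
    qed
    have prd: "(\<Prod>j\<in>UNIV-{k}. g ((\<Sum>b\<in>Basis. (f(bk:=y)) b *\<^sub>R b) $ j)) = (\<Prod>b\<in>Basis-{bk}. g (f b))" for y
    proof -
      have "(\<Prod>j\<in>UNIV-{k}. g ((\<Sum>b\<in>Basis. (f(bk:=y)) b *\<^sub>R b) $ j)) = (\<Prod>j\<in>UNIV-{k}. g (f (axis j 1)))"
        by (intro prod.cong refl, unfold Phi_nth) (auto simp: bk_def axis_eq_axis)
      also have "\<dots> = (\<Prod>b\<in>(\<lambda>j. axis j 1) ` (UNIV-{k}). g (f b))"
        by (subst prod.reindex) (auto simp: inj_on_def axis_eq_axis)
      also have "(\<lambda>j. axis j 1) ` (UNIV-{k}) = (Basis - {bk} :: (real^'p) set)"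
        by (auto simp: Basis_vec_range bk_def axis_eq_axis)
      finally show ?thesis .
    qed
    have "(\<integral>\<^sup>+y. G (\<Sum>b\<in>Basis. (f(bk:=y)) b *\<^sub>R b) \<partial>lborel)
        = (\<integral>\<^sup>+y. q (T + (- (w $ k)) * y) * (\<Prod>b\<in>Basis-{bk}. g (f b)) \<partial>lborel)"
      by (intro nn_integral_cong) (simp only: G_def inn prd, simp add: T_def algebra_simps)
    also have "\<dots> = (\<integral>\<^sup>+y. q (T + (- (w $ k)) * y) \<partial>lborel) * (\<Prod>b\<in>Basis-{bk}. g (f b))"
      by (rule nn_integral_multc) measurable
    also have "(\<integral>\<^sup>+y. q (T + (- (w $ k)) * y) \<partial>lborel) = ennreal (1/\<bar>w$k\<bar>) * (\<integral>\<^sup>+t. q t \<partial>lborel)"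
      using affine_int[of q "- (w $ k)" T] wk by simp
    finally show "(\<integral>\<^sup>+y. G (\<Sum>b\<in>Basis. (f(bk:=y)) b *\<^sub>R b) \<partial>lborel) = ennreal (1/\<bar>w$k\<bar>) * (\<integral>\<^sup>+t. q t \<partial>lborel) * (\<Prod>b\<in>Basis-{bk}. g (f b))" .
  qed
  also have "\<dots> = ennreal (1/\<bar>w$k\<bar>) * (\<integral>\<^sup>+t. q t \<partial>lborel) * (\<integral>\<^sup>+f. (\<Prod>b\<in>Basis-{bk}. g (f b)) \<partial>(\<Pi>\<^sub>M b\<in>Basis-{bk}. lborel))"
    by (rule nn_integral_cmult) measurable
  also have "(\<integral>\<^sup>+f. (\<Prod>b\<in>Basis-{bk}. g (f b)) \<partial>(\<Pi>\<^sub>M b\<in>Basis-{bk}. lborel)) = (\<Prod>b\<in>Basis-{bk}. (\<integral>\<^sup>+t. g t \<partial>lborel))"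
    by (rule P.product_nn_integral_prod) auto
  also have "\<dots> = (\<integral>\<^sup>+t. g t \<partial>lborel) ^ (CARD('p) - 1)"
    using bkB by (simp add: card_Diff_singleton)
  finally show ?thesis unfolding G_def .
qed




lemma int_h: "(\<integral>\<^sup>+l\<in>{0<..}. ennreal (2/(pi*(1+l\<^sup>2))) \<partial>lborel) = 1"
proof -
  have "(\<integral>\<^sup>+l\<in>{0<..}. ennreal (2/(pi*(1+l\<^sup>2))) \<partial>lborel) = ennreal (1 - 0)"
  proof (rule nn_FTC_Ioi[where F="\<lambda>l. 2/pi * arctan l"])
    show "DERIV (\<lambda>l. 2/pi * arctan l) x :> 2/(pi*(1+x\<^sup>2))" for x
      using DERIV_cmult[OF DERIV_arctan[of x], of "2/pi"] by (simp add: divide_simps)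
    show "isCont (\<lambda>l. 2/(pi*(1+l\<^sup>2))) x" for x :: real
      by (intro continuous_intros) (auto, smt (verit) zero_le_power2)
    show "0 \<le> 2/(pi*(1+x\<^sup>2))" for x :: real by (simp add: add_pos_nonneg)
    show "((\<lambda>l. 2/pi * arctan l) \<longlongrightarrow> 0) (at_right 0)"
      by (rule tendsto_eq_intros refl)+ (auto intro!: tendsto_eq_intros)
    show "((\<lambda>l. 2/pi * arctan l) \<longlongrightarrow> 1) at_top"
      using tendsto_mult[OF tendsto_const[of "2/pi"] tendsto_arctan_at_top] by simp
  qed
  then show ?thesis by simp
qed

lemma hs_int: assumes "0 < \<tau>" shows "(\<integral>\<^sup>+t. horseshoe \<tau> t \<partial>lborel) = 1"
proof -
  define F where "F t l = ennreal (phi (\<tau>\<^sup>2 * l\<^sup>2) t * (2 / (pi * (1 + l\<^sup>2)))) * indicator {0<..} l" for t l :: real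
  have [measurable]: "(\<lambda>(t,l). F t l) \<in> borel_measurable (lborel \<Otimes>\<^sub>M lborel)"
    unfolding F_def by measurable
  have "(\<integral>\<^sup>+t. horseshoe \<tau> t \<partial>lborel) = (\<integral>\<^sup>+t. \<integral>\<^sup>+l. F t l \<partial>lborel \<partial>lborel)"
    unfolding horseshoe_def F_def by simp
  also have "\<dots> = (\<integral>\<^sup>+l. \<integral>\<^sup>+t. F t l \<partial>lborel \<partial>lborel)"
    using lborel_pair.Fubini'[of F] by simp
  also have "\<dots> = (\<integral>\<^sup>+l. ennreal (2/(pi*(1+l\<^sup>2))) * indicator {0<..} l \<partial>lborel)"
  proof (intro nn_integral_cong)
    fix l :: real
    show "(\<integral>\<^sup>+t. F t l \<partial>lborel) = ennreal (2/(pi*(1+l\<^sup>2))) * indicator {0<..} l"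
    proof (cases "0 < l")
      case True
      have "(\<integral>\<^sup>+t. F t l \<partial>lborel) = (\<integral>\<^sup>+t. ennreal (phi (\<tau>\<^sup>2 * l\<^sup>2) t) * ennreal (2/(pi*(1+l\<^sup>2))) \<partial>lborel)"
        using True by (intro nn_integral_cong) (auto simp: F_def ennreal_mult[symmetric] phi_nonneg add_pos_nonneg)
      also have "\<dots> = (\<integral>\<^sup>+t. ennreal (phi (\<tau>\<^sup>2 * l\<^sup>2) t) \<partial>lborel) * ennreal (2/(pi*(1+l\<^sup>2)))"
        by (rule nn_integral_multc) measurable
      also have "\<dots> = ennreal (2/(pi*(1+l\<^sup>2)))"
        using True assms by (simp add: int_phi)
      finally show ?thesis using True by simp
    qed (simp add: F_def)
  qed
  also have "\<dots> = 1" using int_h by simp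
  finally show ?thesis .
qed

lemma H_int: assumes "0 < \<gamma>" shows "(\<integral>\<^sup>+u\<in>{0<..}. ennreal (H_EH \<gamma> u) \<partial>lborel) = 1"
proof -
  have "(\<integral>\<^sup>+u\<in>{0<..}. ennreal (H_EH \<gamma> u) \<partial>lborel) = ennreal (0 - (-1))"
  proof (rule nn_FTC_Ioi[where F="\<lambda>u. - ((1 + ln (1 + u)) powr (- \<gamma>))"])
    fix x :: real assume x: "0 < x"
    have l: "0 < 1 + ln (1 + x)" using x by (smt (verit) ln_ge_zero)
    show "DERIV (\<lambda>u. - ((1 + ln (1 + u)) powr (- \<gamma>))) x :> H_EH \<gamma> x"
    proof -
      have e2: "-1-\<gamma> = -\<gamma>-1" by simp
      show ?thesis using x l unfolding H_EH_def e2
        by (auto intro!: derivative_eq_intros simp: divide_simps)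
    qed
    show "isCont (H_EH \<gamma>) x"
      using x l unfolding H_EH_def by (auto intro!: continuous_intros)
    show "0 \<le> H_EH \<gamma> x" using x assms unfolding H_EH_def by simp
  next
    show "((\<lambda>u. - ((1 + ln (1 + u)) powr (- \<gamma>))) \<longlongrightarrow> -1) (at_right 0)"
      using assms by real_asymp
    show "((\<lambda>u. - ((1 + ln (1 + u)) powr (- \<gamma>))) \<longlongrightarrow> 0) at_top"
      using assms by real_asymp
  qed
  then show ?thesis by simp
qed




lemma fEH_int: assumes "0 \<le> s" "s \<le> 1" "0 < \<gamma>" shows "(\<integral>\<^sup>+e. f_EH s \<gamma> e \<partial>lborel) = 1"
proof -
  define F where "F e u = ennreal (phi u e * H_EH \<gamma> u) * indicator {0<..} u" for e u :: real
  have [measurable]: "(\<lambda>(e,u). F e u) \<in> borel_measurable (lborel \<Otimes>\<^sub>M lborel)"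
    unfolding F_def by measurable
  have Hn: "0 < u \<Longrightarrow> 0 \<le> H_EH \<gamma> u" for u using assms unfolding H_EH_def by simp
  have "(\<integral>\<^sup>+e. f_EH s \<gamma> e \<partial>lborel) = (\<integral>\<^sup>+e. ennreal (1-s) * ennreal (phi 1 e) + ennreal s * (\<integral>\<^sup>+u. F e u \<partial>lborel) \<partial>lborel)"
    unfolding f_EH_def F_def using assms by (intro nn_integral_cong) (simp add: ennreal_mult phi_nonneg)
  also have "\<dots> = (\<integral>\<^sup>+e. ennreal (1-s) * ennreal (phi 1 e) \<partial>lborel) + (\<integral>\<^sup>+e. ennreal s * (\<integral>\<^sup>+u. F e u \<partial>lborel) \<partial>lborel)"
    by (rule nn_integral_add) measurable
  also have "(\<integral>\<^sup>+e. ennreal (1-s) * ennreal (phi 1 e) \<partial>lborel) = ennreal (1-s)"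
    by (subst nn_integral_cmult) (auto simp: int_phi)
  also have "(\<integral>\<^sup>+e. ennreal s * (\<integral>\<^sup>+u. F e u \<partial>lborel) \<partial>lborel) = ennreal s * (\<integral>\<^sup>+e. \<integral>\<^sup>+u. F e u \<partial>lborel \<partial>lborel)"
    by (rule nn_integral_cmult) measurable
  also have "(\<integral>\<^sup>+e. \<integral>\<^sup>+u. F e u \<partial>lborel \<partial>lborel) = (\<integral>\<^sup>+u. \<integral>\<^sup>+e. F e u \<partial>lborel \<partial>lborel)"
    using lborel_pair.Fubini'[of F] by simp
  also have "\<dots> = (\<integral>\<^sup>+u. ennreal (H_EH \<gamma> u) * indicator {0<..} u \<partial>lborel)"
  proof (intro nn_integral_cong)
    fix u :: real
    show "(\<integral>\<^sup>+e. F e u \<partial>lborel) = ennreal (H_EH \<gamma> u) * indicator {0<..} u"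
    proof (cases "0 < u")
      case True
      have "(\<integral>\<^sup>+e. F e u \<partial>lborel) = (\<integral>\<^sup>+e. ennreal (phi u e) * ennreal (H_EH \<gamma> u) \<partial>lborel)"
        using True Hn by (intro nn_integral_cong) (auto simp: F_def ennreal_mult[symmetric] phi_nonneg)
      also have "\<dots> = (\<integral>\<^sup>+e. ennreal (phi u e) \<partial>lborel) * ennreal (H_EH \<gamma> u)"
        by (rule nn_integral_multc) measurable
      also have "\<dots> = ennreal (H_EH \<gamma> u)"
        using True by (simp add: int_phi)
      finally show ?thesis using True by simp
    qed (simp add: F_def)
  qed
  also have "\<dots> = 1" using H_int[OF assms(3)] by simp
  finally show ?thesis using assms by (simp add: ennreal_plus[symmetric] del: ennreal_plus)
qed

lemma int_sqrt: "(\<integral>\<^sup>+u\<in>{0<..}. ennreal (1 / (sqrt u * (1 + u))) \<partial>lborel) = ennreal pi"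
proof -
  have "(\<integral>\<^sup>+u\<in>{0<..}. ennreal (1 / (sqrt u * (1 + u))) \<partial>lborel) = ennreal (pi - 0)"
  proof (rule nn_FTC_Ioi[where F="\<lambda>u. 2 * arctan (sqrt u)"])
    fix x :: real assume x: "0 < x"
    show "DERIV (\<lambda>u. 2 * arctan (sqrt u)) x :> 1 / (sqrt x * (1 + x))"
      using x by (auto intro!: derivative_eq_intros simp: divide_simps)
    show "isCont (\<lambda>u. 1 / (sqrt u * (1 + u))) x"
      using x by (auto intro!: continuous_intros)
    show "0 \<le> 1 / (sqrt x * (1 + x))" using x by simp
  next
    show "((\<lambda>u. 2 * arctan (sqrt u)) \<longlongrightarrow> 0) (at_right 0)"
      by real_asymp
    show "((\<lambda>u. 2 * arctan (sqrt u)) \<longlongrightarrow> pi) at_top"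
      by real_asymp
  qed
  then show ?thesis by simp
qed




lemma phi_le: "0 < u \<Longrightarrow> phi u e \<le> 1 / (sqrt (2*pi) * sqrt u)"
  unfolding phi_def by (simp add: divide_simps real_sqrt_mult)

lemma H_le: "0 < \<gamma> \<Longrightarrow> 0 < u \<Longrightarrow> H_EH \<gamma> u \<le> \<gamma> / (1 + u)"
proof -
  assume g: "0 < \<gamma>" and u: "0 < u"
  have "1 \<le> 1 + ln (1 + u)" using u by simp
  then have "(1 + ln (1 + u)) powr (-1-\<gamma>) \<le> (1 + ln (1 + u)) powr 0"
    using g by (intro powr_mono) auto
  then have "(1 + ln (1 + u)) powr (-1-\<gamma>) \<le> 1" using u \<open>1 \<le> 1 + ln (1 + u)\<close> by (auto split: if_splits)
  then show ?thesis unfolding H_EH_def using g u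
    by (simp add: mult_left_le divide_simps)
qed

lemma fEH_bound: assumes "0 < s" "s < 1" "0 < \<gamma>"
  shows "f_EH s \<gamma> e \<le> ennreal ((1-s) / sqrt (2*pi) + s * (\<gamma> / sqrt (2*pi) * pi))"
proof -
  have "(\<integral>\<^sup>+u\<in>{0<..}. ennreal (phi u e * H_EH \<gamma> u) \<partial>lborel)
      \<le> (\<integral>\<^sup>+u\<in>{0<..}. ennreal (\<gamma> / sqrt (2*pi)) * ennreal (1 / (sqrt u * (1 + u))) \<partial>lborel)"
  proof (intro nn_integral_mono)
    fix u :: real
    show "ennreal (phi u e * H_EH \<gamma> u) * indicator {0<..} u \<le> ennreal (\<gamma> / sqrt (2*pi)) * ennreal (1 / (sqrt u * (1 + u))) * indicator {0<..} u"
    proof (cases "0 < u")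
      case True
      have "phi u e * H_EH \<gamma> u \<le> (1 / (sqrt (2*pi) * sqrt u)) * (\<gamma> / (1 + u))"
        using True assms phi_le[OF True] H_le[OF assms(3) True]
        by (intro mult_mono) (auto simp: phi_nonneg H_EH_def)
      also have "\<dots> = (\<gamma> / sqrt (2*pi)) * (1 / (sqrt u * (1 + u)))" by (simp add: field_simps)
      finally show ?thesis using True assms by (simp add: ennreal_mult[symmetric] ennreal_leI)
    qed simp
  qed
  also have "\<dots> = ennreal (\<gamma> / sqrt (2*pi)) * ennreal pi"
    by (subst mult.assoc, subst nn_integral_cmult) (auto simp: int_sqrt)
  finally have I: "(\<integral>\<^sup>+u\<in>{0<..}. ennreal (phi u e * H_EH \<gamma> u) \<partial>lborel) \<le> ennreal (\<gamma> / sqrt (2*pi)) * ennreal pi" .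
  have "f_EH s \<gamma> e \<le> ennreal ((1-s) / sqrt (2*pi)) + ennreal s * (ennreal (\<gamma> / sqrt (2*pi)) * ennreal pi)"
    unfolding f_EH_def
  proof (intro add_mono mult_left_mono I ennreal_leI)
    show "(1 - s) * phi 1 e \<le> (1 - s) / sqrt (2 * pi)"
      using phi_le[of 1 e] assms by (simp add: divide_simps mult_left_mono)
  qed simp
  also have "\<dots> = ennreal ((1-s) / sqrt (2*pi) + s * (\<gamma> / sqrt (2*pi) * pi))"
    using assms by (simp add: ennreal_mult[symmetric] ennreal_plus[symmetric] del: ennreal_plus)
  finally show ?thesis .
qed

lemma hs_t2: assumes "0 < \<tau>"
  shows "ennreal (t\<^sup>2) * horseshoe \<tau> t \<le> ennreal (2 * \<tau> / (pi * sqrt (2*pi)))"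
proof (cases "t = 0")
  case False
  define c where "c = t\<^sup>2 / (2 * \<tau>\<^sup>2)"
  define K where "K = 2 / (pi * sqrt (2*pi) * \<tau>)"
  have c: "0 < c" using False assms by (simp add: c_def)
  have K: "0 < K" using assms by (simp add: K_def)
  have FT: "(\<integral>\<^sup>+l\<in>{0<..}. ennreal (K * (exp (- c / l\<^sup>2) / l^3)) \<partial>lborel) = ennreal (K / (2*c) - 0)"
  proof (rule nn_FTC_Ioi[where F="\<lambda>l. K * exp (- c / l\<^sup>2) / (2*c)"])
    fix x :: real assume x: "0 < x"
    show "DERIV (\<lambda>l. K * exp (- c / l\<^sup>2) / (2*c)) x :> K * (exp (- c / x\<^sup>2) / x^3)"
      using x c by (auto intro!: derivative_eq_intros simp: divide_simps power2_eq_square power3_eq_cube)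
    show "isCont (\<lambda>l. K * (exp (- c / l\<^sup>2) / l^3)) x"
      using x by (auto intro!: continuous_intros)
    show "0 \<le> K * (exp (- c / x\<^sup>2) / x^3)" using x K by simp
  next
    show "((\<lambda>l. K * exp (- c / l\<^sup>2) / (2*c)) \<longlongrightarrow> 0) (at_right 0)"
      using c by real_asymp
    have "((\<lambda>l. - c / l\<^sup>2) \<longlongrightarrow> 0) at_top" by real_asymp
    then have "((\<lambda>l. exp (- c / l\<^sup>2)) \<longlongrightarrow> exp 0) at_top" by (rule tendsto_exp)
    then have "((\<lambda>l. K * exp (- c / l\<^sup>2) / (2*c)) \<longlongrightarrow> K * exp 0 / (2*c)) at_top"
      by (intro tendsto_divide tendsto_mult tendsto_const) (use c in auto)
    then show "((\<lambda>l. K * exp (- c / l\<^sup>2) / (2*c)) \<longlongrightarrow> K / (2*c)) at_top" by simp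
  qed
  have "horseshoe \<tau> t \<le> (\<integral>\<^sup>+l\<in>{0<..}. ennreal (K * (exp (- c / l\<^sup>2) / l^3)) \<partial>lborel)"
    unfolding horseshoe_def
  proof (intro nn_integral_mono)
    fix l :: real
    show "ennreal (phi (\<tau>\<^sup>2 * l\<^sup>2) t * (2 / (pi * (1 + l\<^sup>2)))) * indicator {0<..} l
       \<le> ennreal (K * (exp (- c / l\<^sup>2) / l^3)) * indicator {0<..} l"
    proof (cases "0 < l")
      case True
      have p: "phi (\<tau>\<^sup>2 * l\<^sup>2) t = exp (- c / l\<^sup>2) / (sqrt (2*pi) * \<tau> * l)"
        using True assms unfolding phi_def c_def by (simp add: real_sqrt_mult field_simps)
      have "phi (\<tau>\<^sup>2 * l\<^sup>2) t * (2 / (pi * (1 + l\<^sup>2))) \<le> exp (- c / l\<^sup>2) / (sqrt (2*pi) * \<tau> * l) * (2 / (pi * l\<^sup>2))"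
        unfolding p using True assms by (intro mult_left_mono divide_left_mono) (auto intro!: mult_pos_pos add_pos_nonneg)
      also have "\<dots> = K * (exp (- c / l\<^sup>2) / l^3)"
        unfolding K_def using True assms by (simp add: field_simps power2_eq_square power3_eq_cube)
      finally show ?thesis using True by (simp add: ennreal_leI)
    qed simp
  qed
  also have "\<dots> = ennreal (K / (2*c))" using FT by simp
  finally have "ennreal (t\<^sup>2) * horseshoe \<tau> t \<le> ennreal (t\<^sup>2) * ennreal (K / (2*c))"
    by (rule mult_left_mono) simp
  also have "\<dots> = ennreal (t\<^sup>2 * (K / (2*c)))"
    using c K by (subst ennreal_mult) auto
  also have "t\<^sup>2 * (K / (2*c)) = 2 * \<tau> / (pi * sqrt (2*pi))"
    using False assms by (simp add: K_def c_def field_simps power2_eq_square)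
  finally show ?thesis .
qed simp




lemma ig_fin: assumes a: "0 < a" and b: "0 < b"
  shows "(\<integral>\<^sup>+v\<in>{0<..}. ennreal (invgamma_density a b v * (1/sqrt v)^m) \<partial>lborel) < \<infinity>"
proof -
  define g where "g v = v powr (-a-1) * exp (-b/v) * (1/sqrt v)^m" for v :: real
  have lim: "(g \<longlongrightarrow> 0) (at_right 0)" unfolding g_def using assms by real_asymp
  then have "eventually (\<lambda>v. g v < 1) (at_right 0)" by (rule order_tendstoD) simp
  then obtain d where d: "d > 0" "\<And>v. 0 < v \<Longrightarrow> v < d \<Longrightarrow> g v < 1"
    by (auto simp: eventually_at_right_field)
  define C1 where "C1 = max 1 (d powr (-a-1) * (1/sqrt d)^m)"
  have g1: "g v \<le> C1" if v: "0 < v" "v \<le> 1" for v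
  proof (cases "v < d")
    case True then show ?thesis using d v by (smt (verit) C1_def)
  next
    case False
    have "g v \<le> d powr (-a-1) * 1 * (1/sqrt d)^m"
      unfolding g_def using False v d a b
      by (intro mult_mono power_mono powr_mono2') (auto simp: divide_simps)
    then show ?thesis unfolding C1_def by simp
  qed
  have g2: "g v \<le> v powr (-a-1)" if v: "1 < v" for v
  proof -
    have "g v \<le> v powr (-a-1) * 1 * 1"
      unfolding g_def using v b
      by (intro mult_mono power_le_one) (auto simp: divide_simps)
    then show ?thesis by simp
  qed
  define Cg where "Cg = b powr a / Gamma a"
  have Cg: "0 < Cg" unfolding Cg_def using a b by (simp add: Gamma_real_pos)
  have eq: "invgamma_density a b v * (1/sqrt v)^m = Cg * g v" for v
    by (simp add: invgamma_density_def g_def Cg_def)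
  have FT: "(\<integral>\<^sup>+v\<in>{1<..}. ennreal (v powr (-a-1)) \<partial>lborel) = ennreal (0 - (- inverse a))"
  proof (rule nn_FTC_Ioi[where F="\<lambda>v. - (v powr (-a)) / a"])
    fix x :: real assume x: "1 < x"
    show "DERIV (\<lambda>v. - (v powr (-a)) / a) x :> x powr (-a-1)"
      using x a by (auto intro!: derivative_eq_intros simp: divide_simps)
    show "isCont (\<lambda>v. v powr (-a-1)) x" using x by (auto intro!: continuous_intros)
    show "0 \<le> x powr (-a-1)" by simp
  next
    show "((\<lambda>v. - (v powr (-a)) / a) \<longlongrightarrow> - inverse a) (at_right 1)" using a by real_asymp
    show "((\<lambda>v. - (v powr (-a)) / a) \<longlongrightarrow> 0) at_top" using a by real_asymp
  qed
  have "(\<integral>\<^sup>+v\<in>{0<..}. ennreal (invgamma_density a b v * (1/sqrt v)^m) \<partial>lborel)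
     \<le> (\<integral>\<^sup>+v. ennreal (Cg * C1) * indicator {0<..1} v + ennreal Cg * (ennreal (v powr (-a-1)) * indicator {1<..} v) \<partial>lborel)"
  proof (intro nn_integral_mono)
    fix v :: real
    show "ennreal (invgamma_density a b v * (1/sqrt v)^m) * indicator {0<..} v
      \<le> ennreal (Cg * C1) * indicator {0<..1} v + ennreal Cg * (ennreal (v powr (-a-1)) * indicator {1<..} v)"
    proof (cases "0 < v")
      case True
      show ?thesis
      proof (cases "v \<le> 1")
        case True2: True
        have "Cg * g v \<le> Cg * C1" using g1[OF True True2] Cg by simp
        then show ?thesis using True True2 unfolding eq by (simp add: ennreal_leI)
      next
        case False
        have "Cg * g v \<le> Cg * v powr (-a-1)" using g2 False Cg by simp
        then have "ennreal (Cg * g v) \<le> ennreal Cg * ennreal (v powr (-a-1))"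
          using Cg by (simp add: ennreal_mult[symmetric] ennreal_leI)
        then show ?thesis using True False unfolding eq by simp
      qed
    qed simp
  qed
  also have "\<dots> = ennreal (Cg * C1) * emeasure lborel {0<..1::real} + ennreal Cg * ennreal (0 - (- inverse a))"
    apply (subst nn_integral_add, measurable)
    apply (subst nn_integral_cmult, measurable)
    apply (subst nn_integral_cmult, measurable)
    using FT by simp
  also have "\<dots> < \<infinity>" by (simp add: ennreal_mult_less_top)
  finally show ?thesis .
qed




lemma IG_meas[measurable]: "invgamma_density a b \<in> borel_measurable borel"
  unfolding invgamma_density_def by measurable

lemma vec_nth_meas[measurable (raw)]:
  assumes [measurable]: "f \<in> M \<rightarrow>\<^sub>M (borel :: (real^'p::finite) measure)"
  shows "(\<lambda>x. f x $ j) \<in> borel_measurable M"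
proof -
  have "(\<lambda>v::real^'p. v $ j) \<in> borel_measurable borel" by measurable
  from measurable_comp[OF assms this] show ?thesis by (simp add: comp_def)
qed

lemma joint_meas0: "(\<lambda>p. joint_density s \<gamma> \<tau> a b x y (snd p) (fst p)) \<in> borel_measurable (borel \<Otimes>\<^sub>M (borel :: (real^'p::finite) measure))"
  unfolding joint_density_def by measurable

lemma joint_meas: "(\<lambda>(v, \<beta>). joint_density s \<gamma> \<tau> a b x y \<beta> v) \<in> borel_measurable (lborel \<Otimes>\<^sub>M (lborel :: (real^'p::finite) measure))"
proof -
  have e: "sets (lborel \<Otimes>\<^sub>M (lborel :: (real^'p::finite) measure)) = sets (borel \<Otimes>\<^sub>M (borel :: (real^'p::finite) measure))"
    by (intro sets_pair_measure_cong) auto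
  show ?thesis using joint_meas0[of s \<gamma> \<tau> a b x y]
    by (subst measurable_cong_sets[OF e refl]) (simp add: case_prod_beta')
qed

lemma joint_int_meas: "(\<lambda>v. \<integral>\<^sup>+\<beta>. joint_density s \<gamma> \<tau> a b x y (\<beta>::real^'p::finite) v \<partial>lborel) \<in> borel_measurable lborel"
  using joint_meas by measurable

lemma pos_int:
  assumes [measurable]: "f \<in> borel_measurable M" "S \<in> sets M" and pos: "\<And>x. x \<in> S \<Longrightarrow> 0 < f x"
    and S: "emeasure M S \<noteq> 0"
  shows "(\<integral>\<^sup>+x\<in>S. f x \<partial>M) \<noteq> 0"
proof
  assume "(\<integral>\<^sup>+x\<in>S. f x \<partial>M) = 0"
  then have "AE x in M. f x * indicator S x = 0"
    by (subst (asm) nn_integral_0_iff_AE) auto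
  then have "AE x in M. x \<notin> S"
  proof eventually_elim
    fix x assume "f x * indicator S x = 0"
    then show "x \<notin> S" using pos[of x] by (auto simp: indicator_def split: if_splits)
  qed
  then have "emeasure M S = 0"
    using AE_iff_measurable[of S M "\<lambda>x. x \<notin> S"] sets.sets_into_space[OF assms(2)] by auto
  with S show False by simp
qed




lemma scale_int: assumes [measurable]: "h \<in> borel_measurable borel" and r: "0 < r"
  shows "(\<integral>\<^sup>+e. ennreal (1/r) * h (e/r) \<partial>lborel) = (\<integral>\<^sup>+e. h e \<partial>lborel)"
proof -
  have "(\<integral>\<^sup>+e. ennreal (1/r) * h (e/r) \<partial>lborel) = ennreal (1/r) * (\<integral>\<^sup>+e. h (0 + (1/r) * e) \<partial>lborel)"
    by (subst nn_integral_cmult) (auto simp: divide_inverse mult.commute)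
  also have "\<dots> = ennreal (1/r) * (ennreal (1/\<bar>1/r\<bar>) * (\<integral>\<^sup>+e. h e \<partial>lborel))"
    using r by (subst affine_int) auto
  also have "\<dots> = (ennreal (1/r) * ennreal r) * (\<integral>\<^sup>+e. h e \<partial>lborel)"
    using r by (simp add: mult.assoc)
  also have "ennreal (1/r) * ennreal r = 1" using r by (simp add: ennreal_mult''[symmetric])
  finally show ?thesis by simp
qed

lemma prod_le_pow_ennreal:
  fixes F :: "'i \<Rightarrow> ennreal"
  assumes "finite A" "\<And>i. i \<in> A \<Longrightarrow> F i \<le> c"
  shows "(\<Prod>i\<in>A. F i) \<le> c ^ card A"
  using assms
proof (induction A rule: finite_induct)
  case (insert i A)
  then have "F i * (\<Prod>i\<in>A. F i) \<le> c * c ^ card A"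
    by (intro mult_mono) auto
  then show ?case using insert by simp
qed simp

lemma hs_pos: assumes "0 < \<tau>" shows "0 < horseshoe \<tau> t"
proof -
  have "horseshoe \<tau> t \<noteq> 0" unfolding horseshoe_def
  proof (rule pos_int)
    show "(\<lambda>l. ennreal (phi (\<tau>\<^sup>2 * l\<^sup>2) t * (2 / (pi * (1 + l\<^sup>2))))) \<in> borel_measurable lborel" by measurable
    show "{(0::real)<..} \<in> sets lborel" by simp
    have "emeasure lborel {(0::real)<..1} \<le> emeasure lborel {(0::real)<..}"
      by (intro emeasure_mono) auto
    then show "emeasure lborel {(0::real)<..} \<noteq> 0" by auto
    fix l :: real assume "l \<in> {0<..}"
    then show "0 < ennreal (phi (\<tau>\<^sup>2 * l\<^sup>2) t * (2 / (pi * (1 + l\<^sup>2))))"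
      using assms by (auto simp: phi_def intro!: mult_pos_pos divide_pos_pos add_pos_nonneg)
  qed
  then show ?thesis by (simp add: zero_less_iff_neq_zero)
qed

lemma fe_pos: assumes "s < 1" shows "0 < f_EH s \<gamma> e"
proof -
  have "0 < ennreal ((1 - s) * phi 1 e)" using assms by (simp add: phi_def)
  then show ?thesis unfolding f_EH_def by (simp add: add_pos_nonneg)
qed




theorem corollary2p1:
  fixes x :: "'n::finite \<Rightarrow> real^'p::finite" and y :: "real^'n" and k :: 'p
    and s \<gamma> \<tau> a b :: real
  assumes "CARD('n) \<ge> 2"
    and "0 < s" and "s < 1" and "0 < \<gamma>" and "0 < \<tau>" and "0 < a" and "0 < b"
    and "\<exists>i. x i $ k \<noteq> 0"
  shows "posterior_expectation s \<gamma> \<tau> a b x y (\<lambda>\<beta> v. \<bar>\<beta> $ k\<bar>\<^sup>2) < \<infinity>"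
proof -
  note as = assms
  define n where "n = CARD('n)"
  obtain i0 where i0: "x i0 $ k \<noteq> 0" using assms(8) by blast
  define w where "w = x i0"
  have wk: "w $ k \<noteq> 0" using i0 by (simp add: w_def)
  define Fm where "Fm = (1-s)/sqrt(2*pi) + s*(\<gamma>/sqrt(2*pi)*pi)"
  define Ch where "Ch = 2*\<tau>/(pi* sqrt(2*pi))"
  have Fm: "0 \<le> Fm" unfolding Fm_def using as by simp
  have Ch: "0 \<le> Ch" unfolding Ch_def using as by simp
  define J where "J \<beta> v = joint_density s \<gamma> \<tau> a b x y \<beta> v" for \<beta> v
  define C2 where "C2 = Fm^(n-1) * Ch / \<bar>w$k\<bar>"
  have inner: "(\<integral>\<^sup>+\<beta>. ennreal (\<bar>\<beta>$k\<bar>\<^sup>2) * J \<beta> v \<partial>lborel)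
     \<le> ennreal (invgamma_density a b v * (1/sqrt v)^(n-2)) * ennreal C2" if v: "0 < v" for v
  proof -
    define r where "r = sqrt v"
    have r: "0 < r" using v by (simp add: r_def)
    define q where "q e = ennreal (1/r) * f_EH s \<gamma> (e/r)" for e
    define g where "g t = ennreal (1/r) * horseshoe \<tau> (t/r)" for t
    have [measurable]: "q \<in> borel_measurable borel" unfolding q_def by measurable
    have [measurable]: "g \<in> borel_measurable borel" unfolding g_def by measurable
    define IG where "IG = invgamma_density a b v"
    have IG: "0 \<le> IG" unfolding IG_def invgamma_density_def using v as by simp
    define Cv where "Cv = IG * (r * Ch) * (Fm/r)^(n-1)"
    have Cv0: "0 \<le> Cv" unfolding Cv_def using IG r Ch Fm by simp
    have pw: "ennreal (\<bar>\<beta>$k\<bar>\<^sup>2) * J \<beta> v \<le> ennreal Cv * (q (y$i0 - w \<bullet> \<beta>) * (\<Prod>j\<in>UNIV-{k}. g (\<beta>$j)))" for \<beta>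
    proof -
      have J: "J \<beta> v = ennreal IG * (\<Prod>j\<in>UNIV. g (\<beta>$j)) * (\<Prod>i\<in>UNIV. q (y$i - x i \<bullet> \<beta>))"
        unfolding J_def joint_density_def IG_def q_def g_def r_def ..
      have P1: "(\<Prod>j\<in>UNIV. g (\<beta>$j)) = g (\<beta>$k) * (\<Prod>j\<in>UNIV-{k}. g (\<beta>$j))"
        by (simp add: prod.remove)
      have P2: "(\<Prod>i\<in>UNIV. q (y$i - x i \<bullet> \<beta>)) = q (y$i0 - w \<bullet> \<beta>) * (\<Prod>i\<in>UNIV-{i0}. q (y$i - x i \<bullet> \<beta>))"
        by (simp add: prod.remove w_def)
      have Rq: "(\<Prod>i\<in>UNIV-{i0}. q (y$i - x i \<bullet> \<beta>)) \<le> ennreal ((Fm/r)^(n-1))"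
      proof -
        have "(\<Prod>i\<in>UNIV-{i0}. q (y$i - x i \<bullet> \<beta>)) \<le> ennreal (Fm/r) ^ card (UNIV-{i0})"
        proof (rule prod_le_pow_ennreal)
          fix i
          have "q (y$i - x i \<bullet> \<beta>) \<le> ennreal (1/r) * ennreal Fm"
            unfolding q_def Fm_def using fEH_bound[OF as(2,3,4)] by (intro mult_left_mono) auto
          also have "\<dots> = ennreal (Fm/r)" using r Fm by (simp add: ennreal_mult[symmetric])
          finally show "q (y$i - x i \<bullet> \<beta>) \<le> ennreal (Fm/r)" .
        qed simp
        also have "card (UNIV-{i0}) = n - 1" by (simp add: n_def card_Diff_singleton)
        finally show ?thesis using r Fm by (simp add: ennreal_power)
      qed
      have A: "ennreal (\<bar>\<beta>$k\<bar>\<^sup>2) * g (\<beta>$k) \<le> ennreal (r * Ch)"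
      proof -
        have "ennreal (\<bar>\<beta>$k\<bar>\<^sup>2) * g (\<beta>$k) = ennreal r * (ennreal ((\<beta>$k/r)\<^sup>2) * horseshoe \<tau> (\<beta>$k/r))"
        proof -
          have "\<bar>\<beta>$k\<bar>\<^sup>2 * (1/r) = r * (\<beta>$k/r)\<^sup>2" using r by (simp add: power2_eq_square field_simps)
          then have "ennreal (\<bar>\<beta>$k\<bar>\<^sup>2) * ennreal (1/r) = ennreal r * ennreal ((\<beta>$k/r)\<^sup>2)"
            using r by (simp add: ennreal_mult[symmetric])
          then show ?thesis unfolding g_def by (simp add: mult.assoc[symmetric])
        qed
        also have "\<dots> \<le> ennreal r * ennreal Ch"
          using hs_t2[OF as(5), of "\<beta>$k/r"] unfolding Ch_def by (intro mult_left_mono) auto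
        also have "\<dots> = ennreal (r * Ch)" using r Ch by (simp add: ennreal_mult)
        finally show ?thesis .
      qed
      have "ennreal (\<bar>\<beta>$k\<bar>\<^sup>2) * J \<beta> v
          = ennreal IG * (ennreal (\<bar>\<beta>$k\<bar>\<^sup>2) * g (\<beta>$k)) * (\<Prod>i\<in>UNIV-{i0}. q (y$i - x i \<bullet> \<beta>))
            * (q (y$i0 - w \<bullet> \<beta>) * (\<Prod>j\<in>UNIV-{k}. g (\<beta>$j)))"
        unfolding J P1 P2 by (simp add: ac_simps)
      also have "\<dots> \<le> ennreal IG * ennreal (r * Ch) * ennreal ((Fm/r)^(n-1))
            * (q (y$i0 - w \<bullet> \<beta>) * (\<Prod>j\<in>UNIV-{k}. g (\<beta>$j)))"
        by (intro mult_mono A Rq order_refl) auto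
      also have "ennreal IG * ennreal (r * Ch) * ennreal ((Fm/r)^(n-1)) = ennreal Cv"
        unfolding Cv_def using IG r Ch Fm by (simp add: ennreal_mult)
      finally show ?thesis .
    qed
    have "(\<integral>\<^sup>+\<beta>. ennreal (\<bar>\<beta>$k\<bar>\<^sup>2) * J \<beta> v \<partial>lborel)
        \<le> (\<integral>\<^sup>+\<beta>. ennreal Cv * (q (y$i0 - w \<bullet> \<beta>) * (\<Prod>j\<in>UNIV-{k}. g (\<beta>$j))) \<partial>lborel)"
      by (intro nn_integral_mono pw)
    also have "\<dots> = ennreal Cv * (\<integral>\<^sup>+\<beta>. q (y$i0 - w \<bullet> \<beta>) * (\<Prod>j\<in>UNIV-{k}. g (\<beta>$j)) \<partial>lborel)"
      by (rule nn_integral_cmult) measurable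
    also have "\<dots> = ennreal Cv * (ennreal (1/\<bar>w$k\<bar>) * (\<integral>\<^sup>+t. q t \<partial>lborel) * (\<integral>\<^sup>+t. g t \<partial>lborel) ^ (CARD('p) - 1))"
      by (subst key) (auto simp: wk)
    also have "(\<integral>\<^sup>+t. q t \<partial>lborel) = 1"
      unfolding q_def using scale_int[of "f_EH s \<gamma>" r] r fEH_int[of s \<gamma>] as by simp
    also have "(\<integral>\<^sup>+t. g t \<partial>lborel) = 1"
      unfolding g_def using scale_int[of "horseshoe \<tau>" r] r hs_int[OF as(5)] by simp
    also have "ennreal Cv * (ennreal (1/\<bar>w$k\<bar>) * 1 * 1 ^ (CARD('p) - 1)) = ennreal (Cv / \<bar>w$k\<bar>)"
      using wk Cv0 by (simp add: ennreal_mult[symmetric] divide_inverse)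
    also have "Cv / \<bar>w$k\<bar> = invgamma_density a b v * (1/sqrt v)^(n-2) * C2"
    proof -
      have n2: "n - 1 = Suc (n - 2)" using as(1) by (simp add: n_def)
      have "r * (Fm/r)^(n-1) = Fm^(n-1) * (1/r)^(n-2)"
        unfolding n2 using r by (simp add: power_divide field_simps)
      moreover have "Cv = IG * Ch * (r * (Fm/r)^(n-1))" unfolding Cv_def by (simp add: ac_simps)
      ultimately have "Cv = IG * Ch * (Fm^(n-1) * (1/r)^(n-2))" by simp
      then show ?thesis unfolding C2_def IG_def r_def by (simp add: field_simps)
    qed
    finally have fin: "(\<integral>\<^sup>+\<beta>. ennreal (\<bar>\<beta>$k\<bar>\<^sup>2) * J \<beta> v \<partial>lborel) \<le> ennreal (invgamma_density a b v * (1/sqrt v)^(n-2) * C2)" .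
    have C2nn: "0 \<le> C2" unfolding C2_def using Fm Ch by simp
    have "ennreal (invgamma_density a b v * (1/sqrt v)^(n-2) * C2) = ennreal (invgamma_density a b v * (1/sqrt v)^(n-2)) * ennreal C2"
      by (rule ennreal_mult) (use IG v C2nn in \<open>auto simp: IG_def\<close>)
    then show ?thesis using fin by simp
  qed
  define N where "N = (\<integral>\<^sup>+v\<in>{0<..}. (\<integral>\<^sup>+\<beta>. ennreal (\<bar>\<beta>$k\<bar>\<^sup>2) * J \<beta> v \<partial>lborel) \<partial>lborel)"
  define D where "D = (\<integral>\<^sup>+v\<in>{0<..}. (\<integral>\<^sup>+\<beta>. J \<beta> v \<partial>lborel) \<partial>lborel)"
  have PE: "posterior_expectation s \<gamma> \<tau> a b x y (\<lambda>\<beta> v. \<bar>\<beta> $ k\<bar>\<^sup>2) = N / D"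
    unfolding posterior_expectation_def N_def D_def J_def by simp
  have "N \<le> (\<integral>\<^sup>+v. (ennreal (invgamma_density a b v * (1/sqrt v)^(n-2)) * indicator {0<..} v) * ennreal C2 \<partial>lborel)"
    unfolding N_def
  proof (intro nn_integral_mono)
    fix v :: real
    show "(\<integral>\<^sup>+\<beta>. ennreal (\<bar>\<beta>$k\<bar>\<^sup>2) * J \<beta> v \<partial>lborel) * indicator {0<..} v
      \<le> (ennreal (invgamma_density a b v * (1/sqrt v)^(n-2)) * indicator {0<..} v) * ennreal C2"
      using inner[of v] by (cases "0 < v") (auto simp: ac_simps)
  qed
  also have "\<dots> = (\<integral>\<^sup>+v\<in>{0<..}. ennreal (invgamma_density a b v * (1/sqrt v)^(n-2)) \<partial>lborel) * ennreal C2"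
    by (rule nn_integral_multc) measurable
  also have "\<dots> < \<infinity>"
    using ig_fin[OF as(6,7), of "n-2"] by (simp add: ennreal_mult_less_top)
  finally have Nfin: "N < \<infinity>" .
  have Jm: "(\<lambda>\<beta>. J \<beta> v) \<in> borel_measurable lborel" for v
    unfolding J_def joint_density_def by measurable
  have Jpos: "0 < J \<beta> v" if v: "0 < v" for \<beta> v
  proof -
    have "0 < invgamma_density a b v"
      unfolding invgamma_density_def using v as by (simp add: Gamma_real_pos)
    moreover have "(\<Prod>j\<in>UNIV. ennreal (1 / sqrt v) * horseshoe \<tau> (\<beta> $ j / sqrt v)) \<noteq> 0"
      using hs_pos[OF as(5)] v by (simp add: prod_zero_iff) (metis order_less_irrefl)
    moreover have "(\<Prod>i\<in>UNIV. ennreal (1 / sqrt v) * f_EH s \<gamma> ((y $ i - x i \<bullet> \<beta>) / sqrt v)) \<noteq> 0"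
      using fe_pos[OF as(3)] v by (simp add: prod_zero_iff) (metis order_less_irrefl)
    ultimately show ?thesis unfolding J_def joint_density_def
      by (simp add: zero_less_iff_neq_zero)
  qed
  have "D \<noteq> 0" unfolding D_def
  proof (rule pos_int)
    show "(\<lambda>v. \<integral>\<^sup>+\<beta>. J \<beta> v \<partial>lborel) \<in> borel_measurable lborel"
      unfolding J_def by (rule joint_int_meas)
    show "{(0::real)<..} \<in> sets lborel" by simp
    have "emeasure lborel {(0::real)<..1} \<le> emeasure lborel {(0::real)<..}"
      by (intro emeasure_mono) auto
    then show "emeasure lborel {(0::real)<..} \<noteq> 0" by auto
    fix v :: real assume "v \<in> {0<..}"
    then have v: "0 < v" by simp
    have "(\<integral>\<^sup>+\<beta>\<in>UNIV. J \<beta> v \<partial>lborel) \<noteq> 0"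
      by (rule pos_int) (use Jm Jpos v in auto)
    then show "0 < (\<integral>\<^sup>+\<beta>. J \<beta> v \<partial>lborel)" by (simp add: zero_less_iff_neq_zero)
  qed
  then have "N / D \<noteq> \<infinity>" using Nfin by (auto simp: ennreal_divide_eq_top_iff)
  then show ?thesis unfolding PE by (simp add: less_top)
qed



end
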